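(* Let $n,k,d$ be integers with $1\le k\le d<n$, let $\alpha,\gamma>0$, and let $j$ be an integer with $0\le j\le k-1$. Then $$C^{\mathrm{exact}}_{n,k,d}(\alpha,\gamma)\ \ge\ \frac{n}{n-j}\, C^{\mathrm{exact}}_{n-j,k-j,d-j}(\alpha,\gamma).$$
   Context: A distributed storage system (DSS) with parameters $(n,k,d)$ stores a file across $n$ nodes, each storing an amount $\alpha$ of information (e.g. $\alpha$ symbols over a finite field, where symbols may be split into arbitrarily many sub-symbols), such that the file can be reconstructed from the contents of any $k$ nodes, and any lost node can be repaired by contacting any $d$ of the remaining nodes, each of which transmits an amount $\beta$ to the replacement node, for a total repair bandwidth $\gamma=d\beta$. Repair is exact: the replacement node stores exactly the same content as the lost node. $C^{\mathrm{exact}}_{n,k,d}(\alpha,\gamma)$ denotes the maximum size of a file that can be stored by such an exact-repair DSS with $n$ nodes, node size $\alpha$ and total repair bandwidth $\gamma$. *)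

theory Defs
  imports Complex_Main "HOL-Library.FuncSet"
begin

text \<open>Node i stores at most alpha q-ary symbols: it takes at most q powr alpha values.  Sub-symbol splitting is covered by allowing arbitrary q
  (e.g. q^L).\<close>

definition exact_repair_code ::
  "nat \<Rightarrow> nat \<Rightarrow> nat \<Rightarrow> real \<Rightarrow> real \<Rightarrow> nat \<Rightarrow> nat set \<Rightarrow> (nat \<Rightarrow> nat \<Rightarrow> nat) \<Rightarrow> bool"
where
  "exact_repair_code n k d \<alpha> \<gamma> q M c \<longleftrightarrow>
     finite M \<and> M \<noteq> {} \<and>
     (\<forall>i<n. real (card (c i ` M)) \<le> real q powr \<alpha>) \<and>
     (\<forall>K. K \<subseteq> {..<n} \<and> card K = k \<longrightarrow>
        (\<exists>dec :: (nat \<Rightarrow> nat) \<Rightarrow> nat. \<forall>m\<in>M. dec (restrict (\<lambda>i. c i m) K) = m)) \<and>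
     (\<forall>i<n. \<forall>D. D \<subseteq> {..<n} - {i} \<and> card D = d \<longrightarrow>
        (\<exists>(\<phi> :: nat \<Rightarrow> nat \<Rightarrow> nat) (\<psi> :: (nat \<Rightarrow> nat) \<Rightarrow> nat).
           (\<forall>h\<in>D. real (card ((\<lambda>m. \<phi> h (c h m)) ` M)) \<le> real q powr (\<gamma> / real d)) \<and>
           (\<forall>m\<in>M. \<psi> (restrict (\<lambda>h. \<phi> h (c h m)) D) = c i m)))"

definition C_exact :: "nat \<Rightarrow> nat \<Rightarrow> nat \<Rightarrow> real \<Rightarrow> real \<Rightarrow> real" where
  "C_exact n k d \<alpha> \<gamma> =
     Sup {log (real q) (real (card M)) | q M c. 2 \<le> q \<and> exact_repair_code n k d \<alpha> \<gamma> q M c}"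

end

theory Submission
  imports Defs
begin

lemma dec_iff: "(\<exists>dec. \<forall>m\<in>M. dec (f m) = m) \<longleftrightarrow> inj_on f M"
proof
  assume "\<exists>dec. \<forall>m\<in>M. dec (f m) = m"
  then obtain dec where "\<forall>m\<in>M. dec (f m) = m" by blast
  then show "inj_on f M" by (metis inj_onI)
next
  assume "inj_on f M"
  then have "\<forall>m\<in>M. inv_into M f (f m) = m" by simp
  then show "\<exists>dec. \<forall>m\<in>M. dec (f m) = m" by blast
qed

lemma rep_iff: "(\<exists>psi. \<forall>m\<in>M. psi (f m) = g m) \<longleftrightarrow> (\<forall>m1\<in>M. \<forall>m2\<in>M. f m1 = f m2 \<longrightarrow> g m1 = g m2)"
proof
  assume "\<exists>psi. \<forall>m\<in>M. psi (f m) = g m"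
  then show "\<forall>m1\<in>M. \<forall>m2\<in>M. f m1 = f m2 \<longrightarrow> g m1 = g m2" by metis
next
  assume H: "\<forall>m1\<in>M. \<forall>m2\<in>M. f m1 = f m2 \<longrightarrow> g m1 = g m2"
  have "\<forall>m\<in>M. g (inv_into M f (f m)) = g m"
  proof
    fix m assume m: "m \<in> M"
    have "inv_into M f (f m) \<in> M" using m by (intro inv_into_into) auto
    moreover have "f (inv_into M f (f m)) = f m" using m by (intro f_inv_into_f) auto
    ultimately show "g (inv_into M f (f m)) = g m" using H m by blast
  qed
  then show "\<exists>psi. \<forall>m\<in>M. psi (f m) = g m" by (intro exI[of _ "\<lambda>v. g (inv_into M f v)"]) simp
qed

lemma restrict_eq_iff': "restrict f K = restrict g K \<longleftrightarrow> (\<forall>i\<in>K. f i = g i)"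
  by (auto simp: restrict_def fun_eq_iff)

lemma powr_pow': "0 < (x::real) \<Longrightarrow> (x powr a) ^ m = x powr (real m * a)"
  by (simp add: powr_realpow[symmetric] powr_powr mult.commute)

lemma code_bound:
  assumes code: "exact_repair_code n k d \<alpha> \<gamma> q M c" and kn: "k \<le> n" and q2: "2 \<le> q"
  shows "log (real q) (real (card M)) \<le> real k * \<alpha>"
proof -
  let ?K = "{..<k}"
  from code have fin: "finite M" "M \<noteq> {}" and st: "\<forall>i<n. real (card (c i ` M)) \<le> real q powr \<alpha>"
    and D: "\<forall>K. K \<subseteq> {..<n} \<and> card K = k \<longrightarrow>
        (\<exists>dec :: (nat \<Rightarrow> nat) \<Rightarrow> nat. \<forall>m\<in>M. dec (restrict (\<lambda>i. c i m) K) = m)"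
    unfolding exact_repair_code_def by blast+
  have "\<exists>dec :: (nat \<Rightarrow> nat) \<Rightarrow> nat. \<forall>m\<in>M. dec (restrict (\<lambda>i. c i m) ?K) = m"
    using D[rule_format, of ?K] kn by auto
  then have inj: "inj_on (\<lambda>m. restrict (\<lambda>i. c i m) ?K) M" by (simp add: dec_iff)
  have "card M = card ((\<lambda>m. restrict (\<lambda>i. c i m) ?K) ` M)" using inj by (simp add: card_image)
  also have "\<dots> \<le> card (PiE ?K (\<lambda>i. c i ` M))"
  proof (rule card_mono)
    show "finite (PiE ?K (\<lambda>i. c i ` M))" by (simp add: finite_PiE fin)
    show "(\<lambda>m. restrict (\<lambda>i. c i m) ?K) ` M \<subseteq> PiE ?K (\<lambda>i. c i ` M)"
      by (rule image_subsetI) (simp add: restrict_PiE_iff)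
  qed
  also have "\<dots> = (\<Prod>i\<in>?K. card (c i ` M))" by (simp add: card_PiE)
  finally have "real (card M) \<le> (\<Prod>i\<in>?K. real (card (c i ` M)))"
    by (simp only: of_nat_le_iff of_nat_prod[symmetric])
  also have "\<dots> \<le> (\<Prod>i\<in>?K. real q powr \<alpha>)"
    by (rule prod_mono) (use st kn in auto)
  also have "\<dots> = real q powr (real k * \<alpha>)" using q2 by (simp add: powr_pow')
  finally have le: "real (card M) \<le> real q powr (real k * \<alpha>)" .
  have "card M > 0" using fin by (simp add: card_gt_0_iff)
  then have "log (real q) (real (card M)) \<le> log (real q) (real q powr (real k * \<alpha>))"
    using le q2 by (subst log_le_cancel_iff) auto
  also have "\<dots> = real k * \<alpha>" using q2 by simp
  finally show ?thesis .
qed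

lemma triv_code: assumes "\<alpha> \<ge> 0" "\<gamma> \<ge> 0"
  shows "exact_repair_code n k d \<alpha> \<gamma> 2 {0} (\<lambda>i m. 0)"
  unfolding exact_repair_code_def
proof (intro conjI allI impI)
  show "real (card ((\<lambda>m. 0::nat) ` {0::nat})) \<le> real 2 powr \<alpha>" for i
    using ge_one_powr_ge_zero[of 2 \<alpha>] assms by simp
  show "\<exists>dec :: (nat \<Rightarrow> nat) \<Rightarrow> nat. \<forall>m\<in>{0}. dec (restrict (\<lambda>i. 0) K) = m" for K
    by (intro exI[of _ "\<lambda>_. 0"]) simp
  show "\<exists>(\<phi> :: nat \<Rightarrow> nat \<Rightarrow> nat) (\<psi> :: (nat \<Rightarrow> nat) \<Rightarrow> nat).
           (\<forall>h\<in>D. real (card ((\<lambda>m. \<phi> h ((\<lambda>i m. 0::nat) h m)) ` {0::nat})) \<le> real 2 powr (\<gamma> / real d)) \<and>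
           (\<forall>m\<in>{0}. \<psi> (restrict (\<lambda>h. \<phi> h ((\<lambda>i m. 0) h m)) D) = (\<lambda>i m. 0) i m)" for i D
    apply (intro exI[of _ "\<lambda>_ _. 0"] exI[of _ "\<lambda>_. 0"])
    using ge_one_powr_ge_zero[of 2 "\<gamma> / real d"] assms by simp
qed simp_all

definition sig :: "nat \<Rightarrow> nat \<Rightarrow> nat" where "sig x i = (if i < x then i else i - 1)"

lemma sig_lt: "i < n \<Longrightarrow> x < n \<Longrightarrow> i \<noteq> x \<Longrightarrow> sig x i < n - 1"
  by (auto simp: sig_def)

lemma sig_inj: "inj_on (sig x) (- {x})"
  by (auto simp: sig_def inj_on_def split: if_splits)

lemma step_code:
  assumes k2: "2 \<le> k" and kd: "k \<le> d" and dn: "d < n" and ap: "\<alpha> > 0" and gp: "\<gamma> > 0"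
    and q2: "2 \<le> q" and code: "exact_repair_code (n-1) (k-1) (d-1) \<alpha> \<gamma> q M c"
  shows "\<exists>Q M' c'. 2 \<le> Q \<and> exact_repair_code n k d \<alpha> \<gamma> Q M' c' \<and>
     log (real Q) (real (card M')) = real n / real (n-1) * log (real q) (real (card M))"
proof -
  from code have finM: "finite M" and neM: "M \<noteq> {}"
    and stM: "\<forall>i<n-1. real (card (c i ` M)) \<le> real q powr \<alpha>"
    and decM0: "\<forall>K. K \<subseteq> {..<n-1} \<and> card K = k-1 \<longrightarrow>
        (\<exists>dec :: (nat \<Rightarrow> nat) \<Rightarrow> nat. \<forall>m\<in>M. dec (restrict (\<lambda>i. c i m) K) = m)"
    and repM0: "\<forall>i<n-1. \<forall>D. D \<subseteq> {..<n-1} - {i} \<and> card D = d-1 \<longrightarrow>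
        (\<exists>(\<phi> :: nat \<Rightarrow> nat \<Rightarrow> nat) (\<psi> :: (nat \<Rightarrow> nat) \<Rightarrow> nat).
           (\<forall>h\<in>D. real (card ((\<lambda>m. \<phi> h (c h m)) ` M)) \<le> real q powr (\<gamma> / real (d-1))) \<and>
           (\<forall>m\<in>M. \<psi> (restrict (\<lambda>h. \<phi> h (c h m)) D) = c i m))"
    unfolding exact_repair_code_def by blast+
  have decM: "inj_on (\<lambda>m. restrict (\<lambda>i. c i m) K) M" if "K \<subseteq> {..<n-1}" "card K = k-1" for K
    using decM0 that dec_iff by blast
  have repM: "\<exists>\<phi>::nat \<Rightarrow> nat \<Rightarrow> nat. (\<forall>h\<in>D. real (card ((\<lambda>m. \<phi> h (c h m)) ` M)) \<le> real q powr (\<gamma> / real (d-1))) \<and>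
            (\<forall>m1\<in>M. \<forall>m2\<in>M. (\<forall>h\<in>D. \<phi> h (c h m1) = \<phi> h (c h m2)) \<longrightarrow> c i m1 = c i m2)"
    if a: "i < n-1" "D \<subseteq> {..<n-1} - {i}" "card D = d-1" for i D
  proof -
    obtain \<phi> :: "nat \<Rightarrow> nat \<Rightarrow> nat" and \<psi> :: "(nat \<Rightarrow> nat) \<Rightarrow> nat" where b: "\<forall>h\<in>D. real (card ((\<lambda>m. \<phi> h (c h m)) ` M)) \<le> real q powr (\<gamma> / real (d-1))"
      and r: "\<forall>m\<in>M. \<psi> (restrict (\<lambda>h. \<phi> h (c h m)) D) = c i m"
      using repM0[rule_format, OF a(1), of D] a(2,3) by blast
    have "\<forall>m1\<in>M. \<forall>m2\<in>M. (\<forall>h\<in>D. \<phi> h (c h m1) = \<phi> h (c h m2)) \<longrightarrow> c i m1 = c i m2"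
    proof (intro ballI impI)
      fix m1 m2 assume m: "m1 \<in> M" "m2 \<in> M" and e: "\<forall>h\<in>D. \<phi> h (c h m1) = \<phi> h (c h m2)"
      have "restrict (\<lambda>h. \<phi> h (c h m1)) D = restrict (\<lambda>h. \<phi> h (c h m2)) D"
        using e by (simp add: restrict_eq_iff')
      then show "c i m1 = c i m2" using r m by metis
    qed
    then show ?thesis using b by blast
  qed
  have n2: "2 < n" using k2 kd dn by simp
  define I where "I = {..<n} \<times> {..<d}"
  define FM where "FM = PiE I (\<lambda>_. M)"
  define cont where "cont = (\<lambda>i (F::nat\<times>nat \<Rightarrow> nat). restrict (\<lambda>p. c (sig (fst p) i) (F p)) {p\<in>I. fst p \<noteq> i})"
  have finI: "finite I" by (simp add: I_def)
  have finFM: "finite FM" using finM finI by (simp add: FM_def finite_PiE)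
  have neFM: "FM \<noteq> {}" using neM by (simp add: FM_def PiE_eq_empty_iff)
  have cardFM: "card FM = card M ^ (n*d)" by (simp add: FM_def card_PiE finI I_def card_cartesian_product)
  have FMmem: "F p \<in> M" if "F \<in> FM" "p \<in> I" for F p using that unfolding FM_def by (blast intro: PiE_mem)
  obtain enc where enc: "bij_betw enc FM {0..<card FM}" using ex_bij_betw_finite_nat[OF finFM] by blast
  have injenc: "inj_on enc FM" using enc by (simp add: bij_betw_def)
  define U where "U = (\<Union>i<n. cont i ` FM)"
  have finU: "finite U" using finFM by (simp add: U_def)
  obtain g :: "_ \<Rightarrow> nat" where g: "inj_on g U" using finite_imp_inj_to_nat_seg[OF finU] by blast
  define M' where "M' = enc ` FM"
  define c' where "c' = (\<lambda>i m. g (cont i (inv_into FM enc m)))"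
  have c'enc: "c' i (enc F) = g (cont i F)" if "F \<in> FM" for i F using injenc that by (simp add: c'_def)
  have contU: "cont i F \<in> U" if "i < n" "F \<in> FM" for i F using that by (auto simp: U_def)
  define N where "N = (n-1)*d"
  define Q where "Q = q ^ N"
  have Npos: "0 < N" using n2 kd k2 by (simp add: N_def)
  have Q2: "2 \<le> Q" using self_le_power[of q N] q2 Npos by (simp add: Q_def)
  have qpos: "(0::real) < real q" using q2 by simp
  have realQ: "real Q = real q ^ N" by (simp add: Q_def)
  have stor: "real (card (c' i ` M')) \<le> real Q powr \<alpha>" if i: "i < n" for i
  proof -
    define Ii where "Ii = {p\<in>I. fst p \<noteq> i}"
    have Ii_eq: "Ii = ({..<n} - {i}) \<times> {..<d}" by (auto simp: Ii_def I_def)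
    have cardIi: "card Ii = N" using i by (simp add: Ii_eq card_cartesian_product N_def)
    have finIi: "finite Ii" by (simp add: Ii_eq)
    have "c' i ` M' = (\<lambda>F. g (cont i F)) ` FM"
      unfolding M'_def image_image by (rule image_cong[OF refl]) (simp add: c'enc)
    also have "\<dots> = g ` cont i ` FM" by (simp add: image_image)
    finally have "card (c' i ` M') \<le> card (cont i ` FM)" using finFM by (simp add: card_image_le)
    also have "card (cont i ` FM) \<le> card (PiE Ii (\<lambda>p. c (sig (fst p) i) ` M))"
    proof (rule card_mono)
      show "finite (PiE Ii (\<lambda>p. c (sig (fst p) i) ` M))" using finIi finM by (simp add: finite_PiE)
      show "cont i ` FM \<subseteq> PiE Ii (\<lambda>p. c (sig (fst p) i) ` M)"
      proof (rule image_subsetI)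
        fix F assume "F \<in> FM"
        then show "cont i F \<in> PiE Ii (\<lambda>p. c (sig (fst p) i) ` M)"
          unfolding cont_def Ii_def[symmetric] restrict_PiE_iff using FMmem by (auto simp: Ii_def)
      qed
    qed
    also have "\<dots> = (\<Prod>p\<in>Ii. card (c (sig (fst p) i) ` M))" by (simp add: card_PiE finIi)
    finally have "real (card (c' i ` M')) \<le> (\<Prod>p\<in>Ii. real (card (c (sig (fst p) i) ` M)))"
      by (simp only: of_nat_le_iff of_nat_prod[symmetric])
    also have "\<dots> \<le> (\<Prod>p\<in>Ii. real q powr \<alpha>)"
    proof (rule prod_mono)
      fix p assume "p \<in> Ii"
      then have "sig (fst p) i < n - 1" using i by (intro sig_lt) (auto simp: Ii_def I_def)
      then show "0 \<le> real (card (c (sig (fst p) i) ` M)) \<and> real (card (c (sig (fst p) i) ` M)) \<le> real q powr \<alpha>"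
        using stM by simp
    qed
    also have "\<dots> = real q powr (real N * \<alpha>)" using qpos cardIi by (simp add: powr_pow')
    also have "\<dots> = real Q powr \<alpha>" using qpos
      by (simp add: realQ powr_realpow[symmetric] powr_powr)
    finally show ?thesis .
  qed
  have dec: "inj_on (\<lambda>m. restrict (\<lambda>i. c' i m) K) M'" if K: "K \<subseteq> {..<n}" "card K = k" for K
  proof (rule inj_onI)
    fix m1 m2 assume "m1 \<in> M'" "m2 \<in> M'" and eq: "restrict (\<lambda>i. c' i m1) K = restrict (\<lambda>i. c' i m2) K"
    then obtain F1 F2 where F: "F1 \<in> FM" "F2 \<in> FM" "m1 = enc F1" "m2 = enc F2" by (auto simp: M'_def)
    have finK: "finite K" using K(1) finite_subset by blast
    have ceq: "cont i F1 = cont i F2" if "i \<in> K" for i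
    proof -
      from eq that have "c' i m1 = c' i m2" unfolding restrict_eq_iff' by blast
      then have "g (cont i F1) = g (cont i F2)" using F by (simp add: c'enc)
      moreover have "i < n" using that K by auto
      ultimately show ?thesis using g contU F by (meson inj_onD)
    qed
    have "F1 = F2"
    proof (rule PiE_ext)
      show "F1 \<in> PiE I (\<lambda>_. M)" "F2 \<in> PiE I (\<lambda>_. M)" using F by (auto simp: FM_def)
    next
      fix p assume p: "p \<in> I"
      obtain x r where pxr: "p = (x, r)" by (cases p)
      have xn: "x < n" using p pxr by (simp add: I_def)
      have "k - 1 \<le> card (K - {x})" using K finK by (simp add: card_Diff_singleton_if)
      then obtain K0 where K0: "K0 \<subseteq> K - {x}" "card K0 = k - 1" by (meson obtain_subset_with_card_n)
      have sub: "sig x ` K0 \<subseteq> {..<n-1}"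
      proof
        fix t assume "t \<in> sig x ` K0"
        then obtain i where i: "i \<in> K0" "t = sig x i" by auto
        have "i < n" "i \<noteq> x" using i K0 K(1) by auto
        then show "t \<in> {..<n-1}" using i xn sig_lt[of i n x] by simp
      qed
      have injK0: "inj_on (sig x) K0" using K0 by (auto intro: inj_on_subset[OF sig_inj])
      have cK: "card (sig x ` K0) = k-1" using injK0 K0 by (simp add: card_image)
      have inj: "inj_on (\<lambda>m. restrict (\<lambda>t. c t m) (sig x ` K0)) M" using decM[OF sub cK] .
      have mem: "F1 p \<in> M" "F2 p \<in> M" using F p FMmem by auto
      have "restrict (\<lambda>t. c t (F1 p)) (sig x ` K0) = restrict (\<lambda>t. c t (F2 p)) (sig x ` K0)"
        unfolding restrict_eq_iff'
      proof
        fix t assume "t \<in> sig x ` K0"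
        then obtain i where i: "i \<in> K0" "t = sig x i" by auto
        have "cont i F1 p = cont i F2 p" using ceq[of i] i K0 by auto
        moreover have "p \<in> {p\<in>I. fst p \<noteq> i}" using p pxr i K0 by auto
        ultimately show "c t (F1 p) = c t (F2 p)" using i pxr by (simp add: cont_def)
      qed
      then show "F1 p = F2 p" using inj mem by (meson inj_onD)
    qed
    then show "m1 = m2" using F by simp
  qed
  have rep: "\<exists>(\<phi> :: nat \<Rightarrow> nat \<Rightarrow> nat) (\<psi> :: (nat \<Rightarrow> nat) \<Rightarrow> nat).
           (\<forall>h\<in>D. real (card ((\<lambda>m. \<phi> h (c' h m)) ` M')) \<le> real Q powr (\<gamma> / real d)) \<and>
           (\<forall>m\<in>M'. \<psi> (restrict (\<lambda>h. \<phi> h (c' h m)) D) = c' i m)"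
    if i: "i < n" and D: "D \<subseteq> {..<n} - {i}" "card D = d" for i D
  proof -
    have finD: "finite D" using D(1) finite_subset by blast
    obtain e where e: "bij_betw e {0..<d} D" using ex_bij_betw_nat_finite[OF finD] D(2) by metis
    have eD: "e r \<in> D" if "r < d" for r using e that by (auto simp: bij_betw_def)
    define H where "H = (\<lambda>p::nat\<times>nat. if fst p \<in> D then D - {fst p} else D - {e (snd p)})"
    define Ii where "Ii = {p\<in>I. fst p \<noteq> i}"
    have Hsub: "H p \<subseteq> D - {fst p}" if "p \<in> Ii" for p
      using that eD by (auto simp: H_def Ii_def I_def)
    have Hcard: "card (H p) = d - 1" if "p \<in> Ii" for p
      using that eD D finD by (auto simp: H_def Ii_def I_def)
    have innerrep: "\<forall>p\<in>Ii. \<exists>\<phi>::nat \<Rightarrow> nat \<Rightarrow> nat. (\<forall>t\<in>sig (fst p) ` H p. real (card ((\<lambda>m. \<phi> t (c t m)) ` M)) \<le> real q powr (\<gamma> / real (d-1))) \<and>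
            (\<forall>m1\<in>M. \<forall>m2\<in>M. (\<forall>t\<in>sig (fst p) ` H p. \<phi> t (c t m1) = \<phi> t (c t m2)) \<longrightarrow> c (sig (fst p) i) m1 = c (sig (fst p) i) m2)"
    proof
      fix p assume p: "p \<in> Ii"
      obtain x r where pxr: "p = (x,r)" by (cases p)
      have x: "x < n" "x \<noteq> i" using p pxr by (auto simp: Ii_def I_def)
      have Hs: "H p \<subseteq> D - {x}" using Hsub[OF p] pxr by simp
      have injH: "inj_on (sig x) (H p)" using Hs by (auto intro: inj_on_subset[OF sig_inj])
      have a1: "sig x i < n - 1" using x i by (intro sig_lt) auto
      have a2: "sig x ` H p \<subseteq> {..<n-1} - {sig x i}"
      proof
        fix t assume "t \<in> sig x ` H p"
        then obtain h where h: "h \<in> H p" "t = sig x h" by auto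
        have hD: "h \<in> D" "h \<noteq> x" using h Hs by auto
        have "h < n" "h \<noteq> i" using hD D by auto
        then have "sig x h < n - 1" using x hD by (intro sig_lt) auto
        moreover have "sig x h \<noteq> sig x i"
        proof
          assume "sig x h = sig x i"
          moreover have "h \<in> - {x}" using hD(2) by simp
          moreover have "i \<in> - {x}" using x(2) by simp
          ultimately have "h = i" by (rule inj_onD[OF sig_inj[of x]])
          then show False using \<open>h \<noteq> i\<close> by simp
        qed
        ultimately show "t \<in> {..<n-1} - {sig x i}" using h by auto
      qed
      have a3: "card (sig x ` H p) = d - 1" using injH Hcard[OF p] by (simp add: card_image)
      show "\<exists>\<phi>::nat \<Rightarrow> nat \<Rightarrow> nat. (\<forall>t\<in>sig (fst p) ` H p. real (card ((\<lambda>m. \<phi> t (c t m)) ` M)) \<le> real q powr (\<gamma> / real (d-1))) \<and>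
            (\<forall>m1\<in>M. \<forall>m2\<in>M. (\<forall>t\<in>sig (fst p) ` H p. \<phi> t (c t m1) = \<phi> t (c t m2)) \<longrightarrow> c (sig (fst p) i) m1 = c (sig (fst p) i) m2)"
        using repM[OF a1 a2 a3] pxr by simp
    qed
    then obtain \<Phi> :: "nat \<times> nat \<Rightarrow> nat \<Rightarrow> nat \<Rightarrow> nat" where \<Phi>: "\<forall>p\<in>Ii. (\<forall>t\<in>sig (fst p) ` H p. real (card ((\<lambda>m. \<Phi> p t (c t m)) ` M)) \<le> real q powr (\<gamma> / real (d-1))) \<and>
            (\<forall>m1\<in>M. \<forall>m2\<in>M. (\<forall>t\<in>sig (fst p) ` H p. \<Phi> p t (c t m1) = \<Phi> p t (c t m2)) \<longrightarrow> c (sig (fst p) i) m1 = c (sig (fst p) i) m2)"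
      using bchoice[OF innerrep] by (elim exE) (rule that, assumption)
    define P where "P = (\<lambda>h. {p\<in>Ii. h \<in> H p})"
    define msg where "msg = (\<lambda>h F. restrict (\<lambda>p. \<Phi> p (sig (fst p) h) (c (sig (fst p) h) (F p))) (P h))"
    define W where "W = (\<Union>h\<in>D. msg h ` FM)"
    have finW: "finite W" using finFM finD by (simp add: W_def)
    obtain G :: "_ \<Rightarrow> nat" where G: "inj_on G W" using finite_imp_inj_to_nat_seg[OF finW] by blast
    define \<phi>' where "\<phi>' = (\<lambda>h v. G (restrict (\<lambda>p. \<Phi> p (sig (fst p) h) ((inv_into U g v) p)) (P h)))"
    have Pprop: "p \<in> Ii" "fst p \<noteq> h" "h \<in> H p" if "p \<in> P h" for p h
      using that Hsub[of p] by (auto simp: P_def)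
    have \<phi>'enc: "\<phi>' h (c' h (enc F)) = G (msg h F)" if h: "h \<in> D" "F \<in> FM" for h F
    proof -
      have hn: "h < n" using h D by auto
      have "inv_into U g (c' h (enc F)) = cont h F" using h contU[OF hn] g by (simp add: c'enc)
      moreover have "restrict (\<lambda>p. \<Phi> p (sig (fst p) h) (cont h F p)) (P h) = msg h F"
        unfolding msg_def restrict_eq_iff'
      proof
        fix p assume p: "p \<in> P h"
        then have "p \<in> {p\<in>I. fst p \<noteq> h}" using Pprop[OF p] by (auto simp: Ii_def)
        then show "\<Phi> p (sig (fst p) h) (cont h F p) = \<Phi> p (sig (fst p) h) (c (sig (fst p) h) (F p))"
          by (simp add: cont_def)
      qed
      ultimately show ?thesis by (simp add: \<phi>'_def)
    qed
    have dpos: "0 < real (d-1)" using k2 kd by simp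
    have bound: "real (card ((\<lambda>m. \<phi>' h (c' h m)) ` M')) \<le> real Q powr (\<gamma> / real d)" if h: "h \<in> D" for h
    proof -
      have finP: "finite (P h)" using finI by (simp add: P_def Ii_def)
      have "(\<lambda>m. \<phi>' h (c' h m)) ` M' = (\<lambda>F. G (msg h F)) ` FM"
        unfolding M'_def image_image by (rule image_cong[OF refl]) (simp add: \<phi>'enc h)
      also have "\<dots> = G ` msg h ` FM" by (simp add: image_image)
      finally have "card ((\<lambda>m. \<phi>' h (c' h m)) ` M') \<le> card (msg h ` FM)" using finFM by (simp add: card_image_le)
      also have "card (msg h ` FM) \<le> card (PiE (P h) (\<lambda>p. (\<lambda>m. \<Phi> p (sig (fst p) h) (c (sig (fst p) h) m)) ` M))"
      proof (rule card_mono)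
        show "finite (PiE (P h) (\<lambda>p. (\<lambda>m. \<Phi> p (sig (fst p) h) (c (sig (fst p) h) m)) ` M))"
          using finP finM by (simp add: finite_PiE)
        show "msg h ` FM \<subseteq> PiE (P h) (\<lambda>p. (\<lambda>m. \<Phi> p (sig (fst p) h) (c (sig (fst p) h) m)) ` M)"
        proof (rule image_subsetI)
          fix F assume F: "F \<in> FM"
          have "F p \<in> M" if "p \<in> P h" for p using FMmem[OF F] that by (auto simp: P_def Ii_def)
          then show "msg h F \<in> PiE (P h) (\<lambda>p. (\<lambda>m. \<Phi> p (sig (fst p) h) (c (sig (fst p) h) m)) ` M)"
            unfolding msg_def restrict_PiE_iff by auto
        qed
      qed
      also have "\<dots> = (\<Prod>p\<in>P h. card ((\<lambda>m. \<Phi> p (sig (fst p) h) (c (sig (fst p) h) m)) ` M))"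
        by (simp add: card_PiE finP)
      finally have "real (card ((\<lambda>m. \<phi>' h (c' h m)) ` M')) \<le>
           (\<Prod>p\<in>P h. real (card ((\<lambda>m. \<Phi> p (sig (fst p) h) (c (sig (fst p) h) m)) ` M)))"
        by (simp only: of_nat_le_iff of_nat_prod[symmetric])
      also have "\<dots> \<le> (\<Prod>p\<in>P h. real q powr (\<gamma> / real (d-1)))"
      proof (rule prod_mono)
        fix p assume p: "p \<in> P h"
        have "sig (fst p) h \<in> sig (fst p) ` H p" using Pprop[OF p] by auto
        then show "0 \<le> real (card ((\<lambda>m. \<Phi> p (sig (fst p) h) (c (sig (fst p) h) m)) ` M)) \<and>
             real (card ((\<lambda>m. \<Phi> p (sig (fst p) h) (c (sig (fst p) h) m)) ` M)) \<le> real q powr (\<gamma> / real (d-1))"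
          using \<Phi> Pprop(1)[OF p] by auto
      qed
      also have "\<dots> = real q powr (real (card (P h)) * (\<gamma> / real (d-1)))" using qpos by (simp add: powr_pow')
      also have "\<dots> \<le> real q powr (real ((n-1)*(d-1)) * (\<gamma> / real (d-1)))"
      proof (rule powr_mono)
        define r0 where "r0 = inv_into {0..<d} e h"
        have r0: "r0 < d" "e r0 = h" using e h by (auto simp: r0_def bij_betw_def inv_into_into f_inv_into_f)
        have "P h \<subseteq> ((D - {h}) \<times> {..<d}) \<union> (({..<n} - insert i D) \<times> ({..<d} - {r0}))"
        proof
          fix p assume p: "p \<in> P h"
          obtain x r where pxr: "p = (x, r)" by (cases p)
          have pI: "x < n" "x \<noteq> i" "r < d" "h \<in> H p" "x \<noteq> h" using Pprop[OF p] pxr by (auto simp: Ii_def I_def)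
          show "p \<in> ((D - {h}) \<times> {..<d}) \<union> (({..<n} - insert i D) \<times> ({..<d} - {r0}))"
          proof (cases "x \<in> D")
            case True then show ?thesis using pI pxr by auto
          next
            case False
            then have "h \<in> D - {e r}" using pI pxr by (simp add: H_def)
            then have "r \<noteq> r0" using r0 by auto
            then show ?thesis using pI pxr False by auto
          qed
        qed
        then have "card (P h) \<le> card (((D - {h}) \<times> {..<d}) \<union> (({..<n} - insert i D) \<times> ({..<d} - {r0})))"
          by (rule card_mono[rotated]) (use finD in auto)
        also have "\<dots> \<le> card ((D - {h}) \<times> {..<d}) + card (({..<n} - insert i D) \<times> ({..<d} - {r0}))"
          by (rule card_Un_le)
        also have "\<dots> = (d-1)*d + (n - (d+1))*(d-1)"
        proof -
          have "card (D - {h}) = d - 1" using h D finD by simp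
          moreover have "card ({..<n} - insert i D) = n - (d+1)"
          proof -
            have "insert i D \<subseteq> {..<n}" using i D by auto
            moreover have "card (insert i D) = d + 1"
            proof -
              have "i \<notin> D" using D(1) by blast
              then show ?thesis using D(2) finD by simp
            qed
            moreover have "finite (insert i D)" using finD by simp
            ultimately show ?thesis using card_Diff_subset[of "insert i D" "{..<n}"] by simp
          qed
          moreover have "card ({..<d} - {r0}) = d - 1" using r0 by simp
          ultimately show ?thesis by (simp add: card_cartesian_product)
        qed
        also have "\<dots> = (n-1)*(d-1)"
        proof -
          have "n - 1 = d + (n - (d+1))" using dn by simp
          then show ?thesis by (metis add_mult_distrib2 mult.commute)
        qed
        finally have "card (P h) \<le> (n-1)*(d-1)" .
        then have c: "real (card (P h)) \<le> real ((n-1)*(d-1))" by (simp only: of_nat_le_iff)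
        show "real (card (P h)) * (\<gamma> / real (d-1)) \<le> real ((n-1)*(d-1)) * (\<gamma> / real (d-1))"
          by (rule mult_right_mono[OF c]) (use gp dpos in simp)
        show "1 \<le> real q" using q2 by simp
      qed
      also have "real ((n-1)*(d-1)) * (\<gamma> / real (d-1)) = real N * (\<gamma> / real d)"
        using dpos k2 kd by (simp add: N_def field_simps)
      also have "real q powr (real N * (\<gamma> / real d)) = real Q powr (\<gamma> / real d)"
        using qpos by (simp add: realQ powr_realpow[symmetric] powr_powr)
      finally show ?thesis .
    qed
    have correct: "\<forall>m1\<in>M'. \<forall>m2\<in>M'. restrict (\<lambda>h. \<phi>' h (c' h m1)) D = restrict (\<lambda>h. \<phi>' h (c' h m2)) D
                    \<longrightarrow> c' i m1 = c' i m2"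
    proof (intro ballI impI)
      fix m1 m2 assume "m1 \<in> M'" "m2 \<in> M'" and eq: "restrict (\<lambda>h. \<phi>' h (c' h m1)) D = restrict (\<lambda>h. \<phi>' h (c' h m2)) D"
      then obtain F1 F2 where F: "F1 \<in> FM" "F2 \<in> FM" "m1 = enc F1" "m2 = enc F2" by (auto simp: M'_def)
      have msgeq: "msg h F1 = msg h F2" if h: "h \<in> D" for h
      proof -
        have "\<phi>' h (c' h m1) = \<phi>' h (c' h m2)" using eq h unfolding restrict_eq_iff' by blast
        then have "G (msg h F1) = G (msg h F2)" using F h by (simp add: \<phi>'enc)
        moreover have "msg h F1 \<in> W" "msg h F2 \<in> W" using F h by (auto simp: W_def)
        ultimately show ?thesis using G by (meson inj_onD)
      qed
      have "cont i F1 = cont i F2"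
        unfolding cont_def restrict_eq_iff'
      proof
        fix p assume p0: "p \<in> {p\<in>I. fst p \<noteq> i}"
        then have p: "p \<in> Ii" by (simp add: Ii_def)
        have mem: "F1 p \<in> M" "F2 p \<in> M" using F p0 FMmem by auto
        have "\<forall>t\<in>sig (fst p) ` H p. \<Phi> p t (c t (F1 p)) = \<Phi> p t (c t (F2 p))"
        proof
          fix t assume "t \<in> sig (fst p) ` H p"
          then obtain h where h: "h \<in> H p" "t = sig (fst p) h" by auto
          have hD: "h \<in> D" using h Hsub[OF p] by auto
          have pP: "p \<in> P h" using p h by (simp add: P_def)
          have "msg h F1 p = msg h F2 p" using msgeq[OF hD] by simp
          then show "\<Phi> p t (c t (F1 p)) = \<Phi> p t (c t (F2 p))" using pP h by (simp add: msg_def)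
        qed
        then show "c (sig (fst p) i) (F1 p) = c (sig (fst p) i) (F2 p)" using \<Phi> p mem by blast
      qed
      then show "c' i m1 = c' i m2" using F by (simp add: c'enc)
    qed
    then obtain \<psi> where "\<forall>m\<in>M'. \<psi> (restrict (\<lambda>h. \<phi>' h (c' h m)) D) = c' i m"
      using rep_iff[of M' "\<lambda>m. restrict (\<lambda>h. \<phi>' h (c' h m)) D" "c' i"] by blast
    then show ?thesis using bound by blast
  qed
  have code': "exact_repair_code n k d \<alpha> \<gamma> Q M' c'"
    unfolding exact_repair_code_def
  proof (intro conjI allI impI)
    show "finite M'" using finFM by (simp add: M'_def)
    show "M' \<noteq> {}" using neFM by (simp add: M'_def)
    show "real (card (c' i ` M')) \<le> real Q powr \<alpha>" if "i < n" for i using stor that .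
    show "\<exists>dec :: (nat \<Rightarrow> nat) \<Rightarrow> nat. \<forall>m\<in>M'. dec (restrict (\<lambda>i. c' i m) K) = m"
      if "K \<subseteq> {..<n} \<and> card K = k" for K
      using dec[of K] that by (simp add: dec_iff)
    show "\<exists>(\<phi> :: nat \<Rightarrow> nat \<Rightarrow> nat) (\<psi> :: (nat \<Rightarrow> nat) \<Rightarrow> nat).
           (\<forall>h\<in>D. real (card ((\<lambda>m. \<phi> h (c' h m)) ` M')) \<le> real Q powr (\<gamma> / real d)) \<and>
           (\<forall>m\<in>M'. \<psi> (restrict (\<lambda>h. \<phi> h (c' h m)) D) = c' i m)"
      if "i < n" "D \<subseteq> {..<n} - {i} \<and> card D = d" for i D
      using rep[of i D] that by blast
  qed
  have cardM': "card M' = card M ^ (n*d)" using injenc cardFM by (simp add: M'_def card_image)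
  have cMpos: "0 < card M" using finM neM by (simp add: card_gt_0_iff)
  have lq: "0 < ln (real q)" using q2 by simp
  have "log (real Q) (real (card M')) = (real n * real d * ln (real (card M))) / (real N * ln (real q))"
    by (simp add: log_def cardM' realQ ln_realpow)
  also have "\<dots> = real n / real (n-1) * log (real q) (real (card M))"
    using lq n2 k2 kd by (simp add: N_def log_def field_simps)
  finally show ?thesis using Q2 code' by blast
qed

lemma C_step:
  assumes "2 \<le> k" "k \<le> d" "d < n" "\<alpha> > 0" "\<gamma> > 0"
  shows "real n / real (n-1) * C_exact (n-1) (k-1) (d-1) \<alpha> \<gamma> \<le> C_exact n k d \<alpha> \<gamma>"
proof -
  define S where "S = {log (real q) (real (card M)) | q M c. 2 \<le> q \<and> exact_repair_code n k d \<alpha> \<gamma> q M c}"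
  define S' where "S' = {log (real q) (real (card M)) | q M c. 2 \<le> q \<and> exact_repair_code (n-1) (k-1) (d-1) \<alpha> \<gamma> q M c}"
  have CS: "C_exact n k d \<alpha> \<gamma> = Sup S" by (simp add: C_exact_def S_def)
  have CS': "C_exact (n-1) (k-1) (d-1) \<alpha> \<gamma> = Sup S'" by (simp add: C_exact_def S'_def)
  have bdd: "bdd_above S"
  proof (rule bdd_aboveI)
    fix x assume "x \<in> S"
    then obtain q M c where "x = log (real q) (real (card M))" "2 \<le> q" "exact_repair_code n k d \<alpha> \<gamma> q M c"
      by (auto simp: S_def)
    then show "x \<le> real k * \<alpha>" using code_bound[of n k d \<alpha> \<gamma> q M c] assms by simp
  qed
  have ne: "S' \<noteq> {}"
    using triv_code[of \<alpha> \<gamma> "n-1" "k-1" "d-1"] assms unfolding S'_def by force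
  have npos: "0 < real n" "0 < real (n-1)" using assms by auto
  have "Sup S' \<le> real (n-1) / real n * Sup S"
  proof (rule cSup_least[OF ne])
    fix x assume "x \<in> S'"
    then obtain q M c where x: "x = log (real q) (real (card M))" "2 \<le> q" "exact_repair_code (n-1) (k-1) (d-1) \<alpha> \<gamma> q M c"
      by (auto simp: S'_def)
    obtain Q M' c' where Q: "2 \<le> Q" "exact_repair_code n k d \<alpha> \<gamma> Q M' c'"
      "log (real Q) (real (card M')) = real n / real (n-1) * log (real q) (real (card M))"
      using step_code[OF assms x(2,3)] by blast
    have "real n / real (n-1) * x \<in> S" using Q x(1) unfolding S_def by force
    then have "real n / real (n-1) * x \<le> Sup S" using bdd by (rule cSup_upper)
    then show "x \<le> real (n-1) / real n * Sup S" using npos by (simp add: field_simps)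
  qed
  then show ?thesis using npos unfolding CS CS' by (simp add: field_simps)
qed

theorem theorem3p1:
  fixes n k d j :: nat and \<alpha> \<gamma> :: real
  assumes "1 \<le> k" and "k \<le> d" and "d < n"
    and "\<alpha> > 0" and "\<gamma> > 0"
    and "j \<le> k - 1"
  shows "C_exact n k d \<alpha> \<gamma> \<ge> real n / real (n - j) * C_exact (n - j) (k - j) (d - j) \<alpha> \<gamma>"
  using assms
proof (induction j arbitrary: n k d)
  case 0
  then show ?case by simp
next
  case (Suc j)
  have s: "real n / real (n-1) * C_exact (n-1) (k-1) (d-1) \<alpha> \<gamma> \<le> C_exact n k d \<alpha> \<gamma>"
    using Suc.prems by (intro C_step) auto
  have ih: "real (n-1) / real (n-1-j) * C_exact (n-1-j) (k-1-j) (d-1-j) \<alpha> \<gamma> \<le> C_exact (n-1) (k-1) (d-1) \<alpha> \<gamma>"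
    using Suc.prems by (intro Suc.IH) auto
  have pos: "0 < real (n-1)" "0 \<le> real n / real (n-1)" using Suc.prems by auto
  have "real n / real (n - Suc j) * C_exact (n - Suc j) (k - Suc j) (d - Suc j) \<alpha> \<gamma>
      = real n / real (n-1) * (real (n-1) / real (n-1-j) * C_exact (n-1-j) (k-1-j) (d-1-j) \<alpha> \<gamma>)"
    using pos by (simp add: diff_diff_add)
  also have "\<dots> \<le> real n / real (n-1) * C_exact (n-1) (k-1) (d-1) \<alpha> \<gamma>"
    using ih pos by (intro mult_left_mono) auto
  also have "\<dots> \<le> C_exact n k d \<alpha> \<gamma>" by (rule s)
  finally show ?case .
qed

end
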